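(* (i) The Max-Egal objective is subject to 1-safe UB-improvement by a manipulator $m^-$ over directed networks. (ii) The At-least-1 objective is subject to 1-safe UB-improvement by a manipulator $m^+$ over undirected networks. Here "subject to 1-safe UB-improvement" means: there exist $k$, a network $G$ of the stated type, an agent $m$ and a manipulation $r_m$ of the stated kind such that for every possible network $\overline{G_1}$ of the distance-1 partial network $G_1$ of $m$, \[\max_{P\in O(\overline{G_1}^m)} u(m,P)\ge\max_{P\in O(\overline{G_1})} u(m,P),\] and for at least one possible network $\overline{G_1}$ the inequality is strict.
   Context: Agents $A=\{a_1,\dots,a_n\}$ (finite); the social network $G=\langle A,E\rangle$ is a directed or undirected graph without self-loops; $N(a)$ is the set of (out-)neighbours of $a$. For $C\ni a$, $u(a,C)=|C\cap N(a)|$. For $0<k\le n$, $\Pi_k$ is the set of partitions of $A$ into exactly $k$ nonempty coalitions, and $u(a,P)=u(a,C)$ for the $C\in P$ containing $a$. Objectives: Max-Egal — $O(G)$ is the set of $P\in\Pi_k$ maximizing $\min_{a}u(a,P)$; At-least-1 — $O(G)$ is the set of $P\in\Pi_k$ in which every agent has utility $\ge1$, and if none exists $O(G)=\emptyset$ and all utilities (hence min and max over $O(G)$) are taken as $0$. Manipulator types: $m^-$ removes edges (in directed networks only outgoing edges $(m,a)\in E$); $m^+$ adds edges (in undirected networks any new edge $\{m,a\}$). The manipulator's utility $u(m,P)$ is computed with respect to his true neighbours. Limited information: let $A_0=\{m\}$ and $E_1\subseteq E$ the set of edges with an endpoint in $A_0$; $G_1=(A,E_1)$ is the partial network known to $m$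 (distance 1); $m$ knows all agents of $A$. A possible network of $G_1$ is $\overline{G_1}=(A,E_1\cup E')$ where no edge of $E'$ has an endpoint in $A_0$. $\overline{G_1}^m$ denotes the result of applying the manipulation $r_m$ (the same added/removed edges at $m$) to $\overline{G_1}$, and $u(m,P)$ there is computed with $m$'s true neighbours. *)

theory Defs
  imports "HOL-Library.Disjoint_Sets"
begin

text \<open>Undirected: additionally symmetric
  (an undirected edge {a,b} is represented by both (a,b) and (b,a)).\<close>

definition network_dir :: "nat set \<Rightarrow> (nat \<times> nat) set \<Rightarrow> bool" where
  "network_dir A E \<longleftrightarrow> E \<subseteq> A \<times> A \<and> (\<forall>a. (a, a) \<notin> E)"

definition network_undir :: "nat set \<Rightarrow> (nat \<times> nat) set \<Rightarrow> bool" where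
  "network_undir A E \<longleftrightarrow> network_dir A E \<and> sym E"

definition nbrs :: "(nat \<times> nat) set \<Rightarrow> nat \<Rightarrow> nat set" where
  "nbrs E a = {b. (a, b) \<in> E}"

definition util :: "(nat \<times> nat) set \<Rightarrow> nat \<Rightarrow> nat set \<Rightarrow> nat" where
  "util E a C = card (C \<inter> nbrs E a)"

definition coal :: "nat set set \<Rightarrow> nat \<Rightarrow> nat set" where
  "coal P a = (THE C. C \<in> P \<and> a \<in> C)"

definition utilP :: "(nat \<times> nat) set \<Rightarrow> nat \<Rightarrow> nat set set \<Rightarrow> nat" where
  "utilP E a P = util E a (coal P a)"

definition Pi_k :: "nat set \<Rightarrow> nat \<Rightarrow> nat set set set" where
  "Pi_k A k = {P. partition_on A P \<and> card P = k}"

definition egal :: "nat set \<Rightarrow> (nat \<times> nat) set \<Rightarrow> nat set set \<Rightarrow> nat" where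
  "egal A E P = Min ((\<lambda>a. utilP E a P) ` A)"

definition O_maxegal :: "nat set \<Rightarrow> nat \<Rightarrow> (nat \<times> nat) set \<Rightarrow> nat set set set" where
  "O_maxegal A k E = {P \<in> Pi_k A k. \<forall>Q \<in> Pi_k A k. egal A E Q \<le> egal A E P}"

definition O_atleast1 :: "nat set \<Rightarrow> nat \<Rightarrow> (nat \<times> nat) set \<Rightarrow> nat set set set" where
  "O_atleast1 A k E = {P \<in> Pi_k A k. \<forall>a \<in> A. 1 \<le> utilP E a P}"

text \<open>Best utility of m (w.r.t. its true edges Etrue) over an outcome set; 0 if empty.\<close>
definition maxval :: "(nat \<times> nat) set \<Rightarrow> nat \<Rightarrow> nat set set set \<Rightarrow> nat" where
  "maxval Etrue m Os = (if Os = {} then 0 else Max ((\<lambda>P. utilP Etrue m P) ` Os))"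

definition known_edges :: "nat \<Rightarrow> (nat \<times> nat) set \<Rightarrow> (nat \<times> nat) set" where
  "known_edges m E = {e \<in> E. fst e = m \<or> snd e = m}"

definition possible_dir :: "nat set \<Rightarrow> nat \<Rightarrow> (nat \<times> nat) set \<Rightarrow> (nat \<times> nat) set \<Rightarrow> bool" where
  "possible_dir A m E Eb \<longleftrightarrow> (\<exists>E'. network_dir A E' \<and> (\<forall>(x, y) \<in> E'. x \<noteq> m \<and> y \<noteq> m)
      \<and> Eb = known_edges m E \<union> E')"

definition possible_undir :: "nat set \<Rightarrow> nat \<Rightarrow> (nat \<times> nat) set \<Rightarrow> (nat \<times> nat) set \<Rightarrow> bool" where
  "possible_undir A m E Eb \<longleftrightarrow> (\<exists>E'. network_undir A E' \<and> (\<forall>(x, y) \<in> E'. x \<noteq> m \<and> y \<noteq> m)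
      \<and> Eb = known_edges m E \<union> E')"

text \<open>1-safe UB-improvement for a fixed instance: manip maps a possible network to
  the network after applying the manipulation r_m.\<close>
definition safe_UB_improvement ::
  "(nat set \<Rightarrow> nat \<Rightarrow> (nat \<times> nat) set \<Rightarrow> nat set set set) \<Rightarrow> ((nat \<times> nat) set \<Rightarrow> bool)
   \<Rightarrow> nat set \<Rightarrow> nat \<Rightarrow> (nat \<times> nat) set \<Rightarrow> nat \<Rightarrow> ((nat \<times> nat) set \<Rightarrow> (nat \<times> nat) set) \<Rightarrow> bool" where
  "safe_UB_improvement Obj poss A k E m manip \<longleftrightarrow>
     (\<forall>Eb. poss Eb \<longrightarrow> maxval E m (Obj A k (manip Eb)) \<ge> maxval E m (Obj A k Eb)) \<and>
     (\<exists>Eb. poss Eb \<and> maxval E m (Obj A k (manip Eb)) > maxval E m (Obj A k Eb))"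

end

theory Submission
  imports Defs
begin

lemma coal_eq:
  assumes "partition_on A P" "C \<in> P" "a \<in> C"
  shows "coal P a = C"
  unfolding coal_def
proof (rule the_equality)
  show "C \<in> P \<and> a \<in> C" using assms by blast
next
  fix D assume "D \<in> P \<and> a \<in> D"
  then show "D = C" using assms partition_onD2[OF assms(1)] unfolding disjoint_def by blast
qed

lemma coal_in:
  assumes "partition_on A P" "a \<in> A"
  shows "coal P a \<in> P \<and> a \<in> coal P a"
proof -
  obtain C where "C \<in> P" "a \<in> C" using assms partition_onD1[OF assms(1)] by blast
  then show ?thesis using coal_eq[OF assms(1)] by simp
qed

lemma finite_Pi_k:
  assumes "finite A" shows "finite (Pi_k A k)"
proof -
  have "Pi_k A k \<subseteq> {P. partition_on A P}" unfolding Pi_k_def by blast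
  then show ?thesis using finitely_many_partition_on[OF assms] by (rule finite_subset)
qed

lemma maxval_mono:
  assumes "finite Os'" "Os \<subseteq> Os'"
  shows "maxval E m Os \<le> maxval E m Os'"
proof (cases "Os = {}")
  case True then show ?thesis unfolding maxval_def by simp
next
  case False
  then have "Os' \<noteq> {}" using assms(2) by blast
  moreover have "Max ((\<lambda>P. utilP E m P) ` Os) \<le> Max ((\<lambda>P. utilP E m P) ` Os')"
    using False assms by (intro Max_mono) auto
  ultimately show ?thesis using False unfolding maxval_def by simp
qed

lemma maxval_ge:
  assumes "finite Os" "P \<in> Os"
  shows "utilP E m P \<le> maxval E m Os"
  using assms unfolding maxval_def by auto

lemma O_maxegal_sub: "O_maxegal A k E \<subseteq> Pi_k A k"
  unfolding O_maxegal_def by auto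

lemma O_atleast1_sub: "O_atleast1 A k E \<subseteq> Pi_k A k"
  unfolding O_atleast1_def by auto

lemma egal_zero:
  assumes "finite A" "m \<in> A" "nbrs E m = {}"
  shows "egal A E P = 0"
proof -
  have "utilP E m P = 0" unfolding utilP_def util_def using assms by simp
  then have "Min ((\<lambda>a. utilP E a P) ` A) \<le> 0"
    using assms by (metis Min_le finite_imageI image_eqI)
  then show ?thesis unfolding egal_def by simp
qed

lemma O_maxegal_all:
  assumes "finite A" "m \<in> A" "nbrs E m = {}"
  shows "O_maxegal A k E = Pi_k A k"
  using egal_zero[OF assms] unfolding O_maxegal_def by auto

definition A1 :: "nat set" where "A1 = {0,1,2,3}"
definition E1 :: "(nat \<times> nat) set" where "E1 = {(0,1),(0,2),(1,0),(2,0)}"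
definition R1 :: "(nat \<times> nat) set" where "R1 = {(0,1),(0,2)}"
definition Eb1 :: "(nat \<times> nat) set" where "Eb1 = E1 \<union> {(2,3),(3,2)}"

lemma part1_weak:
  assumes "possible_dir A1 0 E1 Eb"
  shows "maxval E1 0 (O_maxegal A1 2 (Eb - R1)) \<ge> maxval E1 0 (O_maxegal A1 2 Eb)"
proof -
  obtain E' where E': "\<forall>(x, y) \<in> E'. x \<noteq> 0 \<and> y \<noteq> 0" "Eb = known_edges 0 E1 \<union> E'"
    using assms unfolding possible_dir_def by blast
  have "nbrs (Eb - R1) 0 = {}"
    using E' unfolding nbrs_def known_edges_def E1_def R1_def by auto
  then have "O_maxegal A1 2 (Eb - R1) = Pi_k A1 2"
    by (intro O_maxegal_all) (auto simp: A1_def)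
  moreover have fin: "finite (Pi_k A1 2)" by (rule finite_Pi_k) (simp add: A1_def)
  ultimately show ?thesis using maxval_mono[OF fin O_maxegal_sub] by simp
qed

lemma part1_strict:
  "maxval E1 0 (O_maxegal A1 2 (Eb1 - R1)) > maxval E1 0 (O_maxegal A1 2 Eb1)"
proof -
  have finA: "finite A1" by (simp add: A1_def)
  have "nbrs (Eb1 - R1) 0 = {}"
    unfolding nbrs_def Eb1_def E1_def R1_def by auto
  then have O1: "O_maxegal A1 2 (Eb1 - R1) = Pi_k A1 2"
    by (intro O_maxegal_all) (auto simp: A1_def)
  define P1 where "P1 = {{0,1,2},{3::nat}}"
  have pP1: "partition_on A1 P1"
    unfolding P1_def A1_def by (rule partition_onI) (auto simp: disjnt_def)
  have "P1 \<in> Pi_k A1 2" using pP1 unfolding Pi_k_def P1_def by simp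
  moreover have "utilP E1 0 P1 = 2"
  proof -
    have "coal P1 0 = {0,1,2}" by (rule coal_eq[OF pP1]) (auto simp: P1_def)
    moreover have "nbrs E1 0 = {1,2}" unfolding nbrs_def E1_def by auto
    ultimately show ?thesis unfolding utilP_def util_def by simp
  qed
  ultimately have ge2: "2 \<le> maxval E1 0 (O_maxegal A1 2 (Eb1 - R1))"
    using O1 maxval_ge[OF finite_Pi_k[OF finA]] by metis
  define Q0 where "Q0 = {{0,1},{2,3::nat}}"
  have pQ0: "partition_on A1 Q0"
    unfolding Q0_def A1_def by (rule partition_onI) (auto simp: disjnt_def)
  have "{0,1::nat} \<noteq> {2,3}"
  proof
    assume "{0,1::nat} = {2,3}"
    then have "(2::nat) \<in> {0,1}" by simp
    then show False by simp
  qed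
  then have Q0k: "Q0 \<in> Pi_k A1 2" using pQ0 unfolding Pi_k_def Q0_def by simp
  have nb: "nbrs Eb1 0 = {1,2}" "nbrs Eb1 1 = {0}" "nbrs Eb1 2 = {0,3}" "nbrs Eb1 3 = {2}"
    unfolding nbrs_def Eb1_def E1_def by auto
  have cQ: "coal Q0 0 = {0,1}" "coal Q0 1 = {0,1}" "coal Q0 2 = {2,3}" "coal Q0 3 = {2,3}"
    by (rule coal_eq[OF pQ0]; simp add: Q0_def)+
  have "\<forall>a\<in>A1. 1 \<le> utilP Eb1 a Q0"
    unfolding A1_def utilP_def util_def using cQ nb by auto
  then have eQ: "1 \<le> egal A1 Eb1 Q0"
    unfolding egal_def using finA by (auto simp: A1_def)
  have le1: "utilP E1 0 P \<le> 1" if P: "P \<in> O_maxegal A1 2 Eb1" for P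
  proof -
    have pk: "partition_on A1 P" "card P = 2" using P unfolding O_maxegal_def Pi_k_def by auto
    have "1 \<le> egal A1 Eb1 P" using P Q0k eQ unfolding O_maxegal_def by force
    then have all1: "1 \<le> utilP Eb1 a P" if "a \<in> A1" for a
    proof -
      have "Min ((\<lambda>a. utilP Eb1 a P) ` A1) \<le> utilP Eb1 a P" using that finA by (intro Min_le) auto
      then show ?thesis using \<open>1 \<le> egal A1 Eb1 P\<close> unfolding egal_def by linarith
    qed
    have ex: "\<exists>b. b \<in> coal P a \<and> b \<in> nbrs Eb1 a" if "a \<in> A1" for a
    proof -
      have "card (coal P a \<inter> nbrs Eb1 a) \<noteq> 0" using all1[OF that] unfolding utilP_def util_def by simp
      then have "coal P a \<inter> nbrs Eb1 a \<noteq> {}" by (metis card.empty)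
      then show ?thesis by blast
    qed
    have ci: "coal P a \<in> P \<and> a \<in> coal P a" if "a \<in> A1" for a using coal_in[OF pk(1) that] .
    have c1: "coal P 1 = coal P 0"
    proof -
      have "0 \<in> coal P 1" using ex[of 1] nb by (auto simp: A1_def)
      then show ?thesis using coal_eq[OF pk(1), of "coal P 1" 0] ci[of 1] by (simp add: A1_def)
    qed
    have c3: "coal P 3 = coal P 2"
    proof -
      have "2 \<in> coal P 3" using ex[of 3] nb by (auto simp: A1_def)
      then show ?thesis using coal_eq[OF pk(1), of "coal P 3" 2] ci[of 3] by (simp add: A1_def)
    qed
    have n2: "2 \<notin> coal P 0"
    proof
      assume h: "2 \<in> coal P 0"
      have c2: "coal P 2 = coal P 0" using coal_eq[OF pk(1), of "coal P 0" 2] ci[of 0] h by (simp add: A1_def)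
      have sub: "A1 \<subseteq> coal P 0"
        using ci[of 0] ci[of 1] ci[of 2] ci[of 3] c1 c2 c3 by (auto simp: A1_def)
      have "P = {coal P 0}"
      proof
        show "{coal P 0} \<subseteq> P" using ci[of 0] by (simp add: A1_def)
        show "P \<subseteq> {coal P 0}"
        proof
          fix D assume D: "D \<in> P"
          then obtain x where x: "x \<in> D" using partition_onD3[OF pk(1)] by (metis ex_in_conv)
          then have "x \<in> A1" using D partition_onD1[OF pk(1)] by blast
          then have "coal P x = D" using coal_eq[OF pk(1) D x] by simp
          moreover have "coal P x = coal P 0" using coal_eq[OF pk(1), of "coal P 0" x] ci[of 0] sub \<open>x \<in> A1\<close>
            by (auto simp: A1_def)
          ultimately show "D \<in> {coal P 0}" by simp
        qed
      qed
      then have "card P = card {coal P 0}" by (rule arg_cong)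
      then show False using pk(2) by simp
    qed
    have "coal P 0 \<inter> nbrs E1 0 \<subseteq> {1}" using n2 unfolding nbrs_def E1_def by auto
    then have "card (coal P 0 \<inter> nbrs E1 0) \<le> card {1::nat}" by (intro card_mono) auto
    then show ?thesis unfolding utilP_def util_def by simp
  qed
  have "maxval E1 0 (O_maxegal A1 2 Eb1) \<le> 1"
  proof -
    have finO: "finite (O_maxegal A1 2 Eb1)"
      using finite_subset[OF O_maxegal_sub finite_Pi_k[OF finA]] .
    show ?thesis
    proof (cases "O_maxegal A1 2 Eb1 = {}")
      case True then show ?thesis unfolding maxval_def by simp
    next
      case False
      have "Max ((\<lambda>P. utilP E1 0 P) ` O_maxegal A1 2 Eb1) \<le> 1"
        using finO False le1 by (intro Max.boundedI) auto
      then show ?thesis unfolding maxval_def using False by simp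
    qed
  qed
  with ge2 show ?thesis by simp
qed


lemma util_mono:
  assumes "Eb \<subseteq> Eb'" "finite (nbrs Eb' a)"
  shows "utilP Eb a P \<le> utilP Eb' a P"
proof -
  have "nbrs Eb a \<subseteq> nbrs Eb' a" using assms(1) unfolding nbrs_def by auto
  then show ?thesis unfolding utilP_def util_def
    by (intro card_mono) (auto intro: finite_subset[OF _ assms(2)])
qed

definition A2 :: "nat set" where "A2 = {0,1,2}"
definition E2 :: "(nat \<times> nat) set" where "E2 = {(0,1),(1,0)}"
definition S2 :: "nat set" where "S2 = {2}"
definition man2 :: "(nat \<times> nat) set \<Rightarrow> (nat \<times> nat) set" where
  "man2 Eb = Eb \<union> {(0, a) | a. a \<in> S2} \<union> {(a, 0) | a. a \<in> S2}"

lemma part2_weak: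
  assumes "possible_undir A2 0 E2 Eb"
  shows "maxval E2 0 (O_atleast1 A2 1 (man2 Eb)) \<ge> maxval E2 0 (O_atleast1 A2 1 Eb)"
proof -
  obtain E' where E': "network_undir A2 E'" "Eb = known_edges 0 E2 \<union> E'"
    using assms unfolding possible_undir_def by blast
  have "E' \<subseteq> A2 \<times> A2" using E'(1) unfolding network_undir_def network_dir_def by auto
  moreover have "known_edges 0 E2 \<subseteq> A2 \<times> A2"
    unfolding known_edges_def E2_def A2_def by auto
  moreover have "{(0, a) | a. a \<in> S2} \<union> {(a, 0) | a. a \<in> S2} \<subseteq> A2 \<times> A2"
    unfolding S2_def A2_def by auto
  ultimately have sub: "man2 Eb \<subseteq> A2 \<times> A2"
    using E'(2) unfolding man2_def by blast
  have fin: "finite (nbrs (man2 Eb) a)" for a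
  proof -
    have "nbrs (man2 Eb) a \<subseteq> A2" using sub unfolding nbrs_def by blast
    then show ?thesis by (rule finite_subset) (simp add: A2_def)
  qed
  have "Eb \<subseteq> man2 Eb" unfolding man2_def by auto
  then have um: "utilP Eb a P \<le> utilP (man2 Eb) a P" for a P using util_mono[OF _ fin] by blast
  have "O_atleast1 A2 1 Eb \<subseteq> O_atleast1 A2 1 (man2 Eb)"
  proof
    fix P assume "P \<in> O_atleast1 A2 1 Eb"
    then have "P \<in> Pi_k A2 1" "\<forall>a\<in>A2. 1 \<le> utilP Eb a P" unfolding O_atleast1_def by auto
    then show "P \<in> O_atleast1 A2 1 (man2 Eb)" unfolding O_atleast1_def using um order_trans by blast
  qed
  moreover have "finite (O_atleast1 A2 1 (man2 Eb))"
    by (rule finite_subset[OF O_atleast1_sub finite_Pi_k]) (simp add: A2_def)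
  ultimately show ?thesis using maxval_mono by blast
qed

lemma part2_strict:
  "maxval E2 0 (O_atleast1 A2 1 (man2 E2)) > maxval E2 0 (O_atleast1 A2 1 E2)"
proof -
  have "O_atleast1 A2 1 E2 = {}"
  proof -
    have "utilP E2 2 P = 0" for P
      unfolding utilP_def util_def nbrs_def E2_def by simp
    then show ?thesis unfolding O_atleast1_def A2_def by force
  qed
  then have z: "maxval E2 0 (O_atleast1 A2 1 E2) = 0" unfolding maxval_def by simp
  have pA: "partition_on A2 {A2}" by (rule partition_on_space) (simp add: A2_def)
  have c: "coal {A2} a = A2" if "a \<in> A2" for a using coal_eq[OF pA _ that] by simp
  have nb: "nbrs (man2 E2) 0 = {1,2}" "nbrs (man2 E2) 1 = {0}" "nbrs (man2 E2) 2 = {0}"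
    unfolding nbrs_def man2_def E2_def S2_def by auto
  have "{A2} \<in> O_atleast1 A2 1 (man2 E2)"
    unfolding O_atleast1_def Pi_k_def using pA c nb
    by (auto simp: utilP_def util_def A2_def)
  moreover have "utilP E2 0 {A2} = 1"
  proof -
    have "nbrs E2 0 = {1}" unfolding nbrs_def E2_def by auto
    then show ?thesis using c[of 0] unfolding utilP_def util_def by (simp add: A2_def)
  qed
  moreover have "finite (O_atleast1 A2 1 (man2 E2))"
    by (rule finite_subset[OF O_atleast1_sub finite_Pi_k]) (simp add: A2_def)
  ultimately have "1 \<le> maxval E2 0 (O_atleast1 A2 1 (man2 E2))"
    by (metis maxval_ge)
  with z show ?thesis by simp
qed

theorem proposition2:
  shows "(\<exists>A k E m R. finite A \<and> 0 < k \<and> k \<le> card A \<and> network_dir A E \<and> m \<in> A \<and>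
            R \<subseteq> {e \<in> E. fst e = m} \<and>
            safe_UB_improvement O_maxegal (possible_dir A m E) A k E m (\<lambda>Eb. Eb - R))
       \<and> (\<exists>A k E m S. finite A \<and> 0 < k \<and> k \<le> card A \<and> network_undir A E \<and> m \<in> A \<and>
            S \<subseteq> A - {m} - nbrs E m \<and>
            safe_UB_improvement O_atleast1 (possible_undir A m E) A k E m
              (\<lambda>Eb. Eb \<union> {(m, a) | a. a \<in> S} \<union> {(a, m) | a. a \<in> S}))"
proof
  have "possible_dir A1 0 E1 Eb1"
    unfolding possible_dir_def
  proof (intro exI[of _ "{(2,3),(3,2)}"] conjI)
    show "network_dir A1 {(2, 3), (3, 2)}" unfolding network_dir_def A1_def by auto
    show "\<forall>(x, y)\<in>{(2::nat, 3::nat), (3, 2)}. x \<noteq> 0 \<and> y \<noteq> 0" by auto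
    show "Eb1 = known_edges 0 E1 \<union> {(2, 3), (3, 2)}"
      unfolding Eb1_def known_edges_def E1_def by auto
  qed
  then have "safe_UB_improvement O_maxegal (possible_dir A1 0 E1) A1 2 E1 0 (\<lambda>Eb. Eb - R1)"
    unfolding safe_UB_improvement_def using part1_weak part1_strict by blast
  moreover have "network_dir A1 E1" unfolding network_dir_def A1_def E1_def by auto
  moreover have "R1 \<subseteq> {e \<in> E1. fst e = 0}" unfolding R1_def E1_def by auto
  moreover have "card A1 = 4" "finite A1" "(0::nat) \<in> A1" by (simp_all add: A1_def)
  ultimately show "\<exists>A k E m R. finite A \<and> 0 < k \<and> k \<le> card A \<and> network_dir A E \<and> m \<in> A \<and>
            R \<subseteq> {e \<in> E. fst e = m} \<and>
            safe_UB_improvement O_maxegal (possible_dir A m E) A k E m (\<lambda>Eb. Eb - R)"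
    by (intro exI[of _ A1] exI[of _ "2::nat"] exI[of _ E1] exI[of _ "0::nat"] exI[of _ R1] conjI) (assumption | simp)+
next
  have "possible_undir A2 0 E2 E2"
    unfolding possible_undir_def
  proof (intro exI[of _ "{}"] conjI)
    show "network_undir A2 {}" unfolding network_undir_def network_dir_def by (auto simp: sym_def)
    show "E2 = known_edges 0 E2 \<union> {}" unfolding known_edges_def E2_def by auto
  qed auto
  then have "safe_UB_improvement O_atleast1 (possible_undir A2 0 E2) A2 1 E2 0 man2"
    unfolding safe_UB_improvement_def using part2_weak part2_strict by blast
  then have "safe_UB_improvement O_atleast1 (possible_undir A2 0 E2) A2 1 E2 0
     (\<lambda>Eb. Eb \<union> {(0, a) | a. a \<in> S2} \<union> {(a, 0) | a. a \<in> S2})"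
    unfolding man2_def[abs_def] .
  moreover have "network_undir A2 E2"
    unfolding network_undir_def network_dir_def A2_def E2_def by (auto simp: sym_def)
  moreover have "S2 \<subseteq> A2 - {0} - nbrs E2 0" unfolding S2_def A2_def nbrs_def E2_def by auto
  moreover have "card A2 = 3" "finite A2" "(0::nat) \<in> A2" by (simp_all add: A2_def)
  ultimately show "\<exists>A k E m S. finite A \<and> 0 < k \<and> k \<le> card A \<and> network_undir A E \<and> m \<in> A \<and>
            S \<subseteq> A - {m} - nbrs E m \<and>
            safe_UB_improvement O_atleast1 (possible_undir A m E) A k E m
              (\<lambda>Eb. Eb \<union> {(m, a) | a. a \<in> S} \<union> {(a, m) | a. a \<in> S})"
    by (intro exI[of _ A2] exI[of _ "1::nat"] exI[of _ E2] exI[of _ "0::nat"] exI[of _ S2] conjI) (assumption | simp)+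
qed

end
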